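(* Let $w\ge0$ be integrable on $\mathbb{T}$ and let $\nu$ be a positive finite singular Borel measure on $\mathbb{T}$ with $\nu(\operatorname{core}(w))=0$. Then there is a sequence of non-negative bounded functions $\{f_n\}_{n\ge1}$ on $\mathbb{T}$ such that: (i) the measures $f_n\,dm$ converge weak-star to $\nu$; (ii) $\int_{\mathbb{T}}f_n\,dm=\nu(\mathbb{T})$ for all $n$; (iii) $0\le f_n(x)\le\log^+(1/w(x))$ for all $x\in\mathbb{T}$ and all $n$, where the right-hand side is interpreted as $+\infty$ when $w(x)=0$.
   Context: $m$ is normalized arc-length measure on the unit circle $\mathbb{T}$. $\operatorname{core}(w)$ is the union of all open arcs $I\subset\mathbb{T}$ with $\int_I\log w\,dm>-\infty$. $\log^+x=\max(0,\log x)$. *)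

theory Defs
  imports "HOL-Analysis.Analysis"
begin

abbreviation circ :: "complex set" where "circ \<equiv> sphere 0 1"

definition borelT :: "complex measure" where
  "borelT = restrict_space borel circ"

definition mT :: "complex measure" where
  "mT = distr (lebesgue_on {0..<1}) borelT (\<lambda>t. cis (2 * pi * t))"

definition open_arc :: "complex set \<Rightarrow> bool" where
  "open_arc I \<longleftrightarrow> (\<exists>a b. a < b \<and> b - a \<le> 1 \<and> I = (\<lambda>t. cis (2 * pi * t)) ` {a<..<b})"

definition logm :: "(complex \<Rightarrow> real) \<Rightarrow> complex \<Rightarrow> ennreal" where
  "logm w x = (if w x = 0 then \<infinity> else ennreal (max 0 (ln (1 / w x))))"

text \<open>core(w): union of open arcs I with integral over I of log w > -infinity.
  Since log^+ w <= w is integrable, this is equivalent to finiteness of the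
  integral over I of the negative part log^+(1/w).\<close>
definition core :: "(complex \<Rightarrow> real) \<Rightarrow> complex set" where
  "core w = \<Union>{I. open_arc I \<and> (\<integral>\<^sup>+ x. indicator I x * logm w x \<partial>mT) < \<infinity>}"

definition singular_wrt :: "complex measure \<Rightarrow> complex measure \<Rightarrow> bool" where
  "singular_wrt \<nu> \<mu> \<longleftrightarrow> (\<exists>N \<in> sets \<mu>. emeasure \<mu> N = 0 \<and> emeasure \<nu> (space \<nu> - N) = 0)"

end

theory Submission
  imports Defs
begin


definition ee :: "real \<Rightarrow> complex" where "ee t = cis (2 * pi * t)"

lemma ee_eta: "(\<lambda>t. cis (2 * pi * t)) = ee" by (simp add: ee_def fun_eq_iff)

lemma ee_in_circ[simp]: "ee t \<in> circ" by (simp add: ee_def)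

lemma norm_ee[simp]: "cmod (ee t) = 1" by (simp add: ee_def)

lemma continuous_ee: "continuous_on S ee"
  unfolding ee_def by (intro continuous_intros)

lemma ee_add_int: "m \<in> \<int> \<Longrightarrow> ee (t + m) = ee t"
proof -
  assume "m \<in> \<int>"
  have "ee (t + m) = cis (2*pi*t) * cis (2*pi*m)" by (simp add: ee_def distrib_left cis_mult)
  also have "cis (2*pi*m) = 1" using \<open>m \<in> \<int>\<close> by simp
  finally show ?thesis by (simp add: ee_def)
qed

lemma ee_inj: assumes "ee s = ee t" "\<bar>s - t\<bar> < 1" shows "s = t"
proof -
  have "cis (2 * pi * s) = cis (2 * pi * t) * cis (2 * pi * (s - t))"
    by (simp add: cis_mult algebra_simps)
  with assms(1) have "cis (2*pi*(s-t)) = 1" by (simp add: ee_def)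
  then have "cos (2*pi*(s-t)) = 1" by (metis cis.sel(1) one_complex.sel(1))
  then obtain n :: int where n: "2*pi*(s-t) = real_of_int n * 2 * pi" using cos_one_2pi_int by blast
  have "s - t = (2*pi*(s-t)) / (2*pi)" by simp
  also have "\<dots> = n" unfolding n by simp
  finally have "s - t = n" .
  with assms(2) have "\<bar>real_of_int n\<bar> < 1" by simp
  then have "n = 0" by linarith
  with \<open>s - t = n\<close> show ?thesis by simp
qed

lemma ee_surj: assumes "x \<in> circ" shows "\<exists>t. s \<le> t \<and> t < s + 1 \<and> x = ee t"
proof -
  have "x \<noteq> 0" using assms by auto
  have "cmod x = 1" using assms by simp
  then have "sgn x = x" by (simp add: sgn_div_norm)
  define t0 where "t0 = Arg x / (2*pi)"
  have "ee t0 = x" unfolding ee_def t0_def using cis_Arg[OF \<open>x \<noteq> 0\<close>] \<open>sgn x = x\<close> by simp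
  define t where "t = t0 - of_int (floor (t0 - s))"
  have "ee t = ee t0" unfolding t_def
    using ee_add_int[of "- of_int (floor (t0 - s))" t0] by simp
  moreover have "s \<le> t" "t < s + 1" unfolding t_def by linarith+
  ultimately show ?thesis using \<open>ee t0 = x\<close> by metis
qed

lemma space_borelT[simp]: "space borelT = circ"
  by (simp add: borelT_def space_restrict_space)

lemma sets_mT[simp]: "sets mT = sets borelT" by (simp add: mT_def)
lemma space_mT[simp]: "space mT = circ" by (simp add: mT_def)

lemma circ_borel: "circ \<in> sets borel" by simp

lemma sets_borelT_iff: "A \<in> sets borelT \<longleftrightarrow> A \<subseteq> circ \<and> A \<in> sets borel"
  unfolding borelT_def using sets_restrict_space_iff[of circ borel] by auto

lemma measurable_ee: "ee \<in> measurable (lebesgue_on {0..<1}) borelT"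
  unfolding borelT_def
  by (intro measurable_restrict_space2 continuous_imp_measurable_on_sets_lebesgue
       continuous_ee) auto

lemma finite_measure_mT: "finite_measure mT"
proof -
  have "finite_measure (lebesgue_on {0..<(1::real)})"
    by (intro finite_measureI) (simp add: emeasure_restrict_space)
  then show ?thesis unfolding mT_def ee_eta using measurable_ee
    by (rule finite_measure.finite_measure_distr)
qed



lemma arc_eq: assumes "a < b" "b - a \<le> 1"
  shows "ee ` {a<..<b} = ee ` {a..b} - {ee a, ee b}"
proof
  show "ee ` {a<..<b} \<subseteq> ee ` {a..b} - {ee a, ee b}"
  proof
    fix y assume "y \<in> ee ` {a<..<b}"
    then obtain t where t: "a < t" "t < b" "y = ee t" by auto
    have "ee t \<noteq> ee a" using ee_inj[of t a] t assms by auto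
    moreover have "ee t \<noteq> ee b" using ee_inj[of t b] t assms by auto
    ultimately show "y \<in> ee ` {a..b} - {ee a, ee b}" using t by auto
  qed
next
  show "ee ` {a..b} - {ee a, ee b} \<subseteq> ee ` {a<..<b}"
  proof
    fix y assume "y \<in> ee ` {a..b} - {ee a, ee b}"
    then obtain t where t: "a \<le> t" "t \<le> b" "y = ee t" "y \<noteq> ee a" "y \<noteq> ee b" by auto
    then have "t \<noteq> a" "t \<noteq> b" by auto
    with t show "y \<in> ee ` {a<..<b}" by auto
  qed
qed

lemma open_arc_ee: "open_arc I \<longleftrightarrow> (\<exists>a b. a < b \<and> b - a \<le> 1 \<and> I = ee ` {a<..<b})"
  unfolding open_arc_def ee_eta ..

lemma open_arc_sub: "open_arc I \<Longrightarrow> I \<subseteq> circ"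
  unfolding open_arc_ee by auto

lemma open_arc_sets: assumes "open_arc I" shows "I \<in> sets borelT"
proof -
  obtain a b where ab: "a < b" "b - a \<le> 1" "I = ee ` {a<..<b}" using assms open_arc_ee by auto
  have "compact (ee ` {a..b})" by (intro compact_continuous_image continuous_ee compact_Icc)
  then have "ee ` {a..b} \<in> sets borel" by (simp add: borel_closed compact_imp_closed)
  then have "ee ` {a..b} - {ee a, ee b} \<in> sets borel" by (intro sets.Diff) auto
  then show ?thesis using ab arc_eq[of a b] open_arc_sub[OF assms] by (simp add: sets_borelT_iff)
qed

lemma union_arcs_sets:
  assumes mono: "\<And>I J. P I \<Longrightarrow> J \<subseteq> I \<Longrightarrow> P J"
  shows "\<Union>{I. open_arc I \<and> P I} \<in> sets borelT"
proof -
  define Q where "Q = {(a,b). a \<in> \<rat> \<and> b \<in> \<rat> \<and> a < b \<and> b - a \<le> 1 \<and> P (ee ` {a<..<b})}"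
  define F where "F = (\<lambda>(a,b). ee ` {a<..<b})"
  have eq: "\<Union>{I. open_arc I \<and> P I} = (\<Union>q\<in>Q. F q)"
  proof
    show "(\<Union>q\<in>Q. F q) \<subseteq> \<Union>{I. open_arc I \<and> P I}"
      unfolding Q_def F_def open_arc_ee by auto
  next
    show "\<Union>{I. open_arc I \<and> P I} \<subseteq> (\<Union>q\<in>Q. F q)"
    proof
      fix x assume "x \<in> \<Union>{I. open_arc I \<and> P I}"
      then obtain I where I: "open_arc I" "P I" "x \<in> I" by auto
      then obtain a b where ab: "a < b" "b - a \<le> 1" "I = ee ` {a<..<b}" using open_arc_ee by auto
      then obtain t where t: "a < t" "t < b" "x = ee t" using I by auto
      obtain a' where a': "a' \<in> \<rat>" "a < a'" "a' < t" using Rats_dense_in_real[OF t(1)] by auto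
      obtain b' where b': "b' \<in> \<rat>" "t < b'" "b' < b" using Rats_dense_in_real[OF t(2)] by auto
      have sub: "ee ` {a'<..<b'} \<subseteq> I" using ab a' b' by auto
      have "(a',b') \<in> Q" unfolding Q_def using a' b' ab mono[OF I(2) sub] by auto
      moreover have "x \<in> F (a',b')" unfolding F_def using t a' b' by auto
      ultimately show "x \<in> (\<Union>q\<in>Q. F q)" by auto
    qed
  qed
  have "countable Q"
  proof (rule countable_subset)
    show "Q \<subseteq> \<rat> \<times> \<rat>" unfolding Q_def by auto
    show "countable (\<rat> \<times> (\<rat>::real set))" by (intro countable_SIGMA countable_rat)
  qed
  moreover have "F q \<in> sets borelT" if "q \<in> Q" for q
  proof -
    obtain a b where q: "q = (a,b)" "a < b" "b - a \<le> 1" by (cases q) (use \<open>q \<in> Q\<close> in \<open>auto simp: Q_def\<close>)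
    have "open_arc (ee ` {a<..<b})" unfolding open_arc_ee using q by blast
    then show ?thesis unfolding F_def q by (simp add: open_arc_sets)
  qed
  ultimately show ?thesis unfolding eq by (intro sets.countable_UN') auto
qed

lemma core_sets: "core w \<in> sets borelT"
  unfolding core_def
proof (rule union_arcs_sets)
  fix I J assume "(\<integral>\<^sup>+ x. indicator I x * logm w x \<partial>mT) < \<infinity>" "J \<subseteq> I"
  moreover have "(\<integral>\<^sup>+ x. indicator J x * logm w x \<partial>mT) \<le> (\<integral>\<^sup>+ x. indicator I x * logm w x \<partial>mT)"
    using \<open>J \<subseteq> I\<close> by (intro nn_integral_mono) (auto simp: indicator_def)
  ultimately show "(\<integral>\<^sup>+ x. indicator J x * logm w x \<partial>mT) < \<infinity>" by auto
qed

lemma arc_infinite: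
  assumes "open_arc I" "sets \<nu> = sets borelT" "emeasure \<nu> (core w) = 0" "emeasure \<nu> I \<noteq> 0"
  shows "(\<integral>\<^sup>+ x. indicator I x * logm w x \<partial>mT) = \<infinity>"
proof (rule ccontr)
  assume "(\<integral>\<^sup>+ x. indicator I x * logm w x \<partial>mT) \<noteq> \<infinity>"
  then have "I \<subseteq> core w" unfolding core_def using assms(1) by (auto simp: top.not_eq_extremum)
  then have "emeasure \<nu> I \<le> emeasure \<nu> (core w)"
    using core_sets assms(2) by (intro emeasure_mono) auto
  with assms show False by simp
qed



lemma partition_exists:
  assumes fin: "finite_measure \<nu>" and sets_nu: "sets \<nu> = sets borelT" and N: "0 < N"
  shows "\<exists>A :: nat \<Rightarrow> complex set. (\<forall>j<N. open_arc (A j)) \<and> disjoint_family_on A {..<N} \<and>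
     (\<forall>j<N. \<forall>x\<in>A j. \<forall>y\<in>A j. \<exists>t t'. t\<in>{0..2} \<and> t'\<in>{0..2} \<and> \<bar>t - t'\<bar> \<le> 1 / real N \<and> x = ee t \<and> y = ee t') \<and>
     emeasure \<nu> (circ - (\<Union>j<N. A j)) = 0"
proof -
  interpret finite_measure \<nu> by (rule fin)
  define C where "C = {x. measure \<nu> {x} \<noteq> 0}"
  have cC: "countable C" unfolding C_def by (rule countable_support)
  define Bd where "Bd j = {s \<in> {0<..<1::real}. ee (s + j / N) \<in> C}" for j :: nat
  have cBd: "countable (Bd j)" for j
  proof (rule countable_image_inj_on)
    show "countable ((\<lambda>s. ee (s + j / N)) ` Bd j)"
      by (rule countable_subset[OF _ cC]) (auto simp: Bd_def)
    show "inj_on (\<lambda>s. ee (s + j / N)) (Bd j)"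
    proof (rule inj_onI)
      fix s s' assume "s \<in> Bd j" "s' \<in> Bd j" "ee (s + j / N) = ee (s' + j / N)"
      then have "s + j / N = s' + j / N" by (intro ee_inj) (auto simp: Bd_def)
      then show "s = s'" by simp
    qed
  qed
  have "countable (\<Union>j<N. Bd j)" using cBd by auto
  moreover have "uncountable {0<..<1::real}" by (simp add: uncountable_open_interval)
  ultimately obtain s where s: "s \<in> {0<..<1}" "s \<notin> (\<Union>j<N. Bd j)"
    by (metis countable_subset subsetI)
  have atoms: "measure \<nu> {ee (s + j / N)} = 0" if "j < N" for j
    using s that unfolding Bd_def C_def by auto
  define A where "A j = ee ` {s + j / N <..< s + (j+1) / N}" for j :: nat
  have Nr: "real N \<ge> 1" using N by simp
  have len: "(s + (j+1) / N) - (s + j / N) = 1 / N" for j :: nat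
    by (simp add: add_divide_distrib)
  have jle: "real j / N \<le> 1" "real (j+1) / N \<le> 1" "0 \<le> real j / N" if "j < N" for j
    using that N by (auto simp: field_simps)
  have arcs: "\<forall>j<N. open_arc (A j)"
  proof (intro allI impI)
    fix j assume "j < N"
    show "open_arc (A j)" unfolding open_arc_ee A_def
      by (rule exI[of _ "s + j / N"], rule exI[of _ "s + (j+1) / N"]) (use len Nr N in \<open>auto simp: field_simps\<close>)
  qed
  have disj: "disjoint_family_on A {..<N}"
  proof -
    have "A j \<inter> A k = {}" if "j < k" "k < N" for j k
    proof (rule ccontr)
      assume "A j \<inter> A k \<noteq> {}"
      then obtain t t' where t: "s + j / N < t" "t < s + (j+1) / N" "s + k / N < t'" "t' < s + (k+1) / N"
        "ee t = ee t'" unfolding A_def by auto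
      have "real (j+1) / N \<le> real k / N" using that N by (intro divide_right_mono) auto
      moreover have "t = t'"
      proof (rule ee_inj)
        show "ee t = ee t'" using t by simp
        have "j < N" using that by simp
        from jle[OF this] jle[OF that(2)] t show "\<bar>t - t'\<bar> < 1" unfolding abs_less_iff by linarith
      qed
      ultimately show False using t by simp
    qed
    then show ?thesis unfolding disjoint_family_on_def
      by (metis Int_commute lessThan_iff linorder_neqE_nat)
  qed
  have diam: "\<forall>j<N. \<forall>x\<in>A j. \<forall>y\<in>A j. \<exists>t t'. t\<in>{0..2} \<and> t'\<in>{0..2} \<and> \<bar>t - t'\<bar> \<le> 1 / real N \<and> x = ee t \<and> y = ee t'"
  proof (intro allI impI ballI)
    fix j x y assume j: "j < N" and x: "x \<in> A j" and y: "y \<in> A j"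
    obtain t where t: "s + j / N < t" "t < s + (j+1) / N" "x = ee t" using x unfolding A_def by auto
    obtain t' where t': "s + j / N < t'" "t' < s + (j+1) / N" "y = ee t'" using y unfolding A_def by auto
    have tt: "\<bar>t - t'\<bar> \<le> 1 / real N" using t t' len[of j] by linarith
    have j0: "0 \<le> real j / N" "real (j+1) / N \<le> 1" using jle[OF j] by auto
    have s0: "0 < s" "s < 1" using s(1) by auto
    have "0 \<le> t" using t s0 j0 by linarith
    have "t \<le> 2" using t s0 j0 by linarith
    have "0 \<le> t'" using t' s0 j0 by linarith
    have "t' \<le> 2" using t' s0 j0 by linarith
    then have "t \<in> {0..2}" "t' \<in> {0..2}" using \<open>0 \<le> t\<close> \<open>t \<le> 2\<close> \<open>0 \<le> t'\<close> by auto
    then show "\<exists>t t'. t\<in>{0..2} \<and> t'\<in>{0..2} \<and> \<bar>t - t'\<bar> \<le> 1 / real N \<and> x = ee t \<and> y = ee t'"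
      using t t' tt by blast
  qed
  define P where "P = (\<lambda>j. ee (s + j / N)) ` {..<N}"
  have cover: "circ - (\<Union>j<N. A j) \<subseteq> P"
  proof
    fix x assume x: "x \<in> circ - (\<Union>j<N. A j)"
    then obtain t where t: "s \<le> t" "t < s + 1" "x = ee t" using ee_surj[of x s] by auto
    define j where "j = nat \<lfloor>(t - s) * N\<rfloor>"
    have "0 \<le> (t - s) * N" "(t - s) * N < N" using t N by auto
    then have j1: "real j \<le> (t - s) * N" "(t - s) * N < real j + 1" "j < N"
      unfolding j_def by linarith+
    have "s + j / N \<le> t" using j1 N by (simp add: field_simps)
    moreover have "t < s + (j+1) / N" using j1 N by (simp add: field_simps)
    ultimately have "t = s + j / N \<or> t \<in> {s + j / N <..< s + (j+1) / N}" by auto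
    then show "x \<in> P"
    proof
      assume "t = s + j / N" then show ?thesis unfolding P_def using t j1 by auto
    next
      assume "t \<in> {s + j / N <..< s + (j+1) / N}"
      then have "x \<in> A j" unfolding A_def using t by auto
      with x j1 show ?thesis by auto
    qed
  qed
  have Psets: "P \<in> sets \<nu>"
  proof -
    have "finite P" unfolding P_def by auto
    then have "closed P" by (rule finite_imp_closed)
    then show ?thesis unfolding sets_nu sets_borelT_iff P_def by auto
  qed
  have "emeasure \<nu> P = (\<Sum>x\<in>P. emeasure \<nu> {x})"
    by (rule emeasure_eq_sum_singleton) (auto simp: P_def sets_nu sets_borelT_iff)
  also have "\<dots> = 0"
    by (rule sum.neutral) (auto simp: P_def emeasure_eq_measure atoms)
  finally have "emeasure \<nu> (circ - (\<Union>j<N. A j)) \<le> 0"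
    using emeasure_mono[OF cover Psets] by simp
  then have "emeasure \<nu> (circ - (\<Union>j<N. A j)) = 0" by simp
  with arcs disj diam show ?thesis by blast
qed



lemma logm_measurable[measurable]: assumes [measurable]: "w \<in> borel_measurable M" shows "logm w \<in> borel_measurable M"
  unfolding logm_def by measurable

definition HH :: "(complex \<Rightarrow> real) \<Rightarrow> nat \<Rightarrow> complex \<Rightarrow> real" where
  "HH w M x = enn2real (min (of_nat M) (logm w x))"

lemma HH_enn: "ennreal (HH w M x) = min (of_nat M) (logm w x)"
  unfolding HH_def by (intro ennreal_enn2real) (simp add: min_less_iff_disj of_nat_less_top)

lemma HH_nonneg: "0 \<le> HH w M x" unfolding HH_def by simp

lemma HH_le: "HH w M x \<le> real M"
proof -
  have "ennreal (HH w M x) \<le> ennreal (real M)" unfolding HH_enn by (simp add: ennreal_of_nat_eq_real_of_nat)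
  then show ?thesis by (simp add: HH_nonneg)
qed

lemma HH_le_logm: "ennreal (HH w M x) \<le> logm w x" unfolding HH_enn by simp

lemma HH_mono: "M \<le> M' \<Longrightarrow> HH w M x \<le> HH w M' x"
proof -
  assume "M \<le> M'"
  then have "ennreal (HH w M x) \<le> ennreal (HH w M' x)" unfolding HH_enn
    by (intro min.mono) auto
  then show ?thesis using ennreal_le_iff[OF HH_nonneg] by blast
qed

lemma HH_measurable[measurable]: assumes [measurable]: "w \<in> borel_measurable M" shows "HH w n \<in> borel_measurable M"
  unfolding HH_def by measurable

lemma SUP_HH: "(SUP M. ennreal (HH w M x)) = logm w x"
proof -
  let ?X = "\<lambda>M. min (of_nat M) (logm w x) :: ennreal"
  have "incseq ?X" by (intro monoI min.mono) auto
  then have 1: "?X \<longlonglongrightarrow> (SUP M. ?X M)" by (rule LIMSEQ_SUP)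
  have "?X \<longlonglongrightarrow> min top (logm w x)"
    by (intro tendsto_min of_nat_tendsto_top_ennreal tendsto_const)
  then have "?X \<longlonglongrightarrow> logm w x" by simp
  with 1 have "(SUP M. ?X M) = logm w x" by (rule LIMSEQ_unique)
  then show ?thesis unfolding HH_enn .
qed



lemma integrable_bounded_fm:
  fixes f :: "'a \<Rightarrow> 'b::{banach,second_countable_topology}"
  assumes "finite_measure M" "f \<in> borel_measurable M" "\<And>x. x \<in> space M \<Longrightarrow> norm (f x) \<le> B"
  shows "integrable M f"
  using assms by (intro finite_measure.integrable_const_bound[where B=B]) (auto intro!: AE_I2)

definition II where "II w A M j = (\<integral> x. indicator (A j) x * HH w M x \<partial>mT)"
definition cc where "cc \<nu> w A M j = measure \<nu> (A j) / II w A M j"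
definition ff where "ff \<nu> w A M K x = (\<Sum>j<K. cc \<nu> w A M j * (indicator (A j) x * HH w M x))"

context
  fixes w :: "complex \<Rightarrow> real" and \<nu> :: "complex measure" and A :: "nat \<Rightarrow> complex set" and K :: nat
  assumes w_meas[measurable]: "w \<in> borel_measurable mT"
  and nu_fin: "finite_measure \<nu>" and nu_sets: "sets \<nu> = sets borelT"
  and A_sets: "\<And>j. j<K \<Longrightarrow> A j \<in> sets borelT"
  and A_disj: "disjoint_family_on A {..<K}"
  and A_cover: "emeasure \<nu> (circ - (\<Union>j<K. A j)) = 0"
  and A_inf: "\<And>j. j<K \<Longrightarrow> emeasure \<nu> (A j) \<noteq> 0 \<Longrightarrow> (\<integral>\<^sup>+ x. indicator (A j) x * logm w x \<partial>mT) = \<infinity>"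
begin

lemma A_sets_mT[measurable]: "j < K \<Longrightarrow> A j \<in> sets mT" using A_sets by simp

lemma exists_M: "\<exists>M. \<forall>j<K. emeasure \<nu> (A j) \<le> (\<integral>\<^sup>+ x. indicator (A j) x * ennreal (HH w M x) \<partial>mT)"
proof -
  have ev: "eventually (\<lambda>M. emeasure \<nu> (A j) \<le> (\<integral>\<^sup>+ x. indicator (A j) x * ennreal (HH w M x) \<partial>mT)) sequentially"
    if j: "j < K" for j
  proof (cases "emeasure \<nu> (A j) = 0")
    case True then show ?thesis by simp
  next
    case False
    define F where "F M x = indicator (A j) x * ennreal (HH w M x)" for M x
    have Fm: "F M \<in> borel_measurable mT" for M unfolding F_def using j by measurable
    have Finc: "incseq F"
      unfolding F_def by (intro monoI le_funI mult_left_mono ennreal_leI HH_mono) (auto simp: le_fun_def)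
    have "(\<lambda>x. SUP M. F M x) = (\<lambda>x. indicator (A j) x * logm w x)"
      unfolding F_def by (auto simp: fun_eq_iff SUP_HH indicator_def)
    then have "(SUP M. integral\<^sup>N mT (F M)) = \<infinity>"
      using nn_integral_monotone_convergence_SUP[OF Finc Fm] A_inf[OF j False] by simp
    moreover have "emeasure \<nu> (A j) < \<infinity>"
      using finite_measure.emeasure_finite[OF nu_fin] by (simp add: top.not_eq_extremum)
    ultimately obtain M where M: "emeasure \<nu> (A j) < integral\<^sup>N mT (F M)"
      by (metis less_SUP_iff)
    show ?thesis unfolding eventually_sequentially
    proof (intro exI allI impI)
      fix M' assume "M \<le> M'"
      then have "integral\<^sup>N mT (F M) \<le> integral\<^sup>N mT (F M')"
        using Finc by (intro nn_integral_mono) (auto simp: incseq_def le_fun_def)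
      with M show "emeasure \<nu> (A j) \<le> (\<integral>\<^sup>+ x. indicator (A j) x * ennreal (HH w M' x) \<partial>mT)"
        unfolding F_def by simp
    qed
  qed
  have "eventually (\<lambda>M. \<forall>j\<in>{..<K}. emeasure \<nu> (A j) \<le> (\<integral>\<^sup>+ x. indicator (A j) x * ennreal (HH w M x) \<partial>mT)) sequentially"
    using ev by (intro eventually_ball_finite) auto
  then show ?thesis unfolding eventually_sequentially by auto
qed


lemma fm_mT: "finite_measure mT" by (rule finite_measure_mT)

lemma intg_ind_h: "j < K \<Longrightarrow> integrable mT (\<lambda>x. indicator (A j) x * HH w M x)"
  by (rule integrable_bounded_fm[OF fm_mT, where B="real M"])
     (auto simp: indicator_def HH_nonneg HH_le)

lemma nn_II: assumes "j < K"
  shows "(\<integral>\<^sup>+ x. indicator (A j) x * ennreal (HH w M x) \<partial>mT) = ennreal (II w A M j)"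
proof -
  have "(\<integral>\<^sup>+ x. indicator (A j) x * ennreal (HH w M x) \<partial>mT) = (\<integral>\<^sup>+ x. ennreal (indicator (A j) x * HH w M x) \<partial>mT)"
    by (intro nn_integral_cong) (auto simp: indicator_def)
  also have "\<dots> = ennreal (II w A M j)" unfolding II_def
    by (intro nn_integral_eq_integral intg_ind_h assms AE_I2) (auto simp: HH_nonneg)
  finally show ?thesis .
qed

lemma II_nonneg: "0 \<le> II w A M j"
  unfolding II_def by (intro integral_nonneg_AE AE_I2) (auto simp: HH_nonneg)

context
  fixes M assumes M_good: "\<forall>j<K. emeasure \<nu> (A j) \<le> (\<integral>\<^sup>+ x. indicator (A j) x * ennreal (HH w M x) \<partial>mT)"
begin

lemma cc_props: assumes j: "j < K"
  shows "0 \<le> cc \<nu> w A M j" "cc \<nu> w A M j \<le> 1" "cc \<nu> w A M j * II w A M j = measure \<nu> (A j)"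
proof -
  have le: "measure \<nu> (A j) \<le> II w A M j"
    using M_good j nn_II[OF j] II_nonneg finite_measure.emeasure_eq_measure[OF nu_fin]
    by (metis ennreal_le_iff)
  show "0 \<le> cc \<nu> w A M j" unfolding cc_def using II_nonneg by simp
  show "cc \<nu> w A M j \<le> 1" unfolding cc_def using le II_nonneg[of M j]
    by (cases "II w A M j = 0") (auto simp: divide_le_eq_1)
  show "cc \<nu> w A M j * II w A M j = measure \<nu> (A j)"
  proof (cases "II w A M j = 0")
    case True then show ?thesis using le unfolding cc_def by (simp add: measure_nonneg antisym)
  next
    case False then show ?thesis unfolding cc_def by simp
  qed
qed

lemma ff_in: assumes "k < K" "x \<in> A k" shows "ff \<nu> w A M K x = cc \<nu> w A M k * HH w M x"
proof -
  have "ff \<nu> w A M K x = (\<Sum>j<K. if j = k then cc \<nu> w A M k * HH w M x else 0)"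
    unfolding ff_def
  proof (intro sum.cong refl)
    fix j assume "j \<in> {..<K}"
    then show "cc \<nu> w A M j * (indicator (A j) x * HH w M x) = (if j = k then cc \<nu> w A M k * HH w M x else 0)"
      using A_disj assms unfolding disjoint_family_on_def by (auto simp: indicator_def)
  qed
  also have "\<dots> = cc \<nu> w A M k * HH w M x" using assms by simp
  finally show ?thesis .
qed

lemma ff_out: assumes "x \<notin> (\<Union>j<K. A j)" shows "ff \<nu> w A M K x = 0"
  unfolding ff_def using assms by (auto intro!: sum.neutral simp: indicator_def)

lemma ff_bounds: "0 \<le> ff \<nu> w A M K x" "ff \<nu> w A M K x \<le> HH w M x"
proof -
  have "0 \<le> ff \<nu> w A M K x \<and> ff \<nu> w A M K x \<le> HH w M x"
  proof (cases "x \<in> (\<Union>j<K. A j)")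
    case True
    then obtain k where k: "k < K" "x \<in> A k" by auto
    show ?thesis unfolding ff_in[OF k] using cc_props[OF k(1)] HH_nonneg[of w M x]
      by (simp add: mult_left_le_one_le)
  next
    case False then show ?thesis using ff_out HH_nonneg by simp
  qed
  then show "0 \<le> ff \<nu> w A M K x" "ff \<nu> w A M K x \<le> HH w M x" by auto
qed

lemma ff_meas: "ff \<nu> w A M K \<in> borel_measurable mT"
  unfolding ff_def by measurable

lemma estimate:
  fixes g :: "complex \<Rightarrow> complex" and \<epsilon> :: real
  assumes gc: "continuous_on circ g" and eps: "0 \<le> \<epsilon>"
    and osc: "\<forall>j<K. \<forall>x\<in>A j. \<forall>y\<in>A j. cmod (g x - g y) \<le> \<epsilon>"
  shows "cmod ((\<integral>x. g x * complex_of_real (ff \<nu> w A M K x) \<partial>mT) - (\<integral>x. g x \<partial>\<nu>)) \<le> 2 * \<epsilon> * measure \<nu> circ"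
proof -
  interpret nu: finite_measure \<nu> by (rule nu_fin)
  have space_nu: "space \<nu> = circ" using sets_eq_imp_space_eq[OF nu_sets] by simp
  have gm: "g \<in> borel_measurable borelT" unfolding borelT_def
    by (rule borel_measurable_continuous_on_restrict[OF gc])
  have gmT[measurable]: "g \<in> borel_measurable mT" using gm by (simp add: measurable_cong_sets[OF sets_mT refl])
  have gnu[measurable]: "g \<in> borel_measurable \<nu>" using gm by (simp add: measurable_cong_sets[OF nu_sets refl])
  have Anu[measurable]: "A j \<in> sets \<nu>" if "j < K" for j using A_sets[OF that] nu_sets by simp
  have "compact (g ` circ)" by (intro compact_continuous_image gc) auto
  then obtain B where B: "\<And>x. x \<in> circ \<Longrightarrow> cmod (g x) \<le> B"
    using compact_imp_bounded bounded_iff by (metis imageI)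
  have "(1::complex) \<in> circ" by simp
  then have B0: "0 \<le> B" using B[of 1] norm_ge_zero order_trans by blast
  define h where "h = HH w M"
  define c where "c = cc \<nu> w A M"
  define F where "F j x = complex_of_real (indicator (A j) x * h x)" for j x
  define T where "T j = (\<integral>x. g x * F j x \<partial>mT)" for j
  define U where "U j = (\<integral>x. g x * complex_of_real (indicator (A j) x) \<partial>\<nu>)" for j
  have hm[measurable]: "h \<in> borel_measurable mT" unfolding h_def by measurable
  have h0: "0 \<le> h x" "h x \<le> real M" for x unfolding h_def by (auto simp: HH_nonneg HH_le)
  have Fb: "cmod (F j x) \<le> real M" for j x unfolding F_def using h0[of x] by (auto simp: indicator_def)
  have Fm[measurable]: "F j \<in> borel_measurable mT" if "j < K" for j
    unfolding F_def using that by measurable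
  have gFm: "(\<lambda>x. g x * F j x) \<in> borel_measurable mT" if "j < K" for j
    using that by measurable
  have intT: "integrable mT (\<lambda>x. g x * F j x)" if "j < K" for j
    using that by (intro integrable_bounded_fm[OF fm_mT, where B="B * real M"])
      (auto simp: norm_mult intro!: mult_mono B Fb B0 gFm)
  have intU: "integrable \<nu> (\<lambda>x. g x * complex_of_real (indicator (A j) x))" if "j < K" for j
    using that by (intro integrable_bounded_fm[OF nu_fin, where B="B"])
      (auto simp: norm_mult space_nu indicator_def B B0)
  have eq1: "(\<integral>x. g x * complex_of_real (ff \<nu> w A M K x) \<partial>mT) = (\<Sum>j<K. of_real (c j) * T j)"
  proof -
    have "(\<integral>x. g x * complex_of_real (ff \<nu> w A M K x) \<partial>mT) = (\<integral>x. (\<Sum>j<K. of_real (c j) * (g x * F j x)) \<partial>mT)"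
      unfolding ff_def F_def c_def h_def of_real_sum sum_distrib_left
      by (intro Bochner_Integration.integral_cong refl sum.cong) (simp add: ac_simps)
    also have "\<dots> = (\<Sum>j<K. (\<integral>x. of_real (c j) * (g x * F j x) \<partial>mT))"
      by (rule Bochner_Integration.integral_sum) (auto intro!: integrable_mult_right intT)
    also have "\<dots> = (\<Sum>j<K. of_real (c j) * T j)" unfolding T_def by simp
    finally show ?thesis .
  qed
  have eq2: "(\<integral>x. g x \<partial>\<nu>) = (\<Sum>j<K. U j)"
  proof -
    define N where "N = circ - (\<Union>j<K. A j)"
    have Nsets: "N \<in> sets \<nu>" unfolding N_def space_nu[symmetric]
      by (intro sets.Diff sets.top sets.finite_UN) (auto intro: Anu)
    have "N \<in> null_sets \<nu>" using Nsets A_cover unfolding N_def by (simp add: null_sets_def)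
    moreover have "{x \<in> space \<nu>. \<not> g x = (\<Sum>j<K. g x * complex_of_real (indicator (A j) x))} \<subseteq> N"
    proof
      fix x assume x: "x \<in> {x \<in> space \<nu>. \<not> g x = (\<Sum>j<K. g x * complex_of_real (indicator (A j) x))}"
      show "x \<in> N"
      proof (rule ccontr)
        assume "x \<notin> N"
        then obtain k where k: "k < K" "x \<in> A k" using x space_nu unfolding N_def by auto
        have "(\<Sum>j<K. g x * complex_of_real (indicator (A j) x)) = (\<Sum>j<K. if j = k then g x else 0)"
        proof (intro sum.cong refl)
          fix j assume "j \<in> {..<K}"
          then show "g x * complex_of_real (indicator (A j) x) = (if j = k then g x else 0)"
            using A_disj k unfolding disjoint_family_on_def by (auto simp: indicator_def)
        qed
        also have "\<dots> = g x" using k by simp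
        finally show False using x by simp
      qed
    qed
    ultimately have ae: "AE x in \<nu>. g x = (\<Sum>j<K. g x * complex_of_real (indicator (A j) x))"
      by (rule AE_I')
    have "(\<integral>x. g x \<partial>\<nu>) = (\<integral>x. (\<Sum>j<K. g x * complex_of_real (indicator (A j) x)) \<partial>\<nu>)"
      by (rule integral_cong_AE) (use ae in auto)
    also have "\<dots> = (\<Sum>j<K. U j)" unfolding U_def by (rule Bochner_Integration.integral_sum) (auto intro!: intU)
    finally show ?thesis .
  qed
  have est: "cmod (of_real (c j) * T j - U j) \<le> 2 * \<epsilon> * measure \<nu> (A j)" if j: "j < K" for j
  proof (cases "A j = {}")
    case True
    then show ?thesis unfolding T_def U_def F_def using eps by simp
  next
    case False
    then obtain x0 where x0: "x0 \<in> A j" by auto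
    define z where "z = g x0"
    have cp: "0 \<le> c j" "c j \<le> 1" "c j * II w A M j = measure \<nu> (A j)"
      using cc_props[OF j] unfolding c_def by auto
    have intF: "integrable mT (F j)"
      unfolding F_def h_def complex_of_real_integrable_eq using intg_ind_h[OF j] by simp
    have intD1: "integrable mT (\<lambda>x. (g x - z) * F j x)"
      using intT[OF j] intF by (simp add: algebra_simps)
    have intI: "integrable \<nu> (\<lambda>x. complex_of_real (indicator (A j) x))"
      using j by (intro integrable_bounded_fm[OF nu_fin, where B=1]) (auto simp: indicator_def)
    have intD2: "integrable \<nu> (\<lambda>x. (g x - z) * complex_of_real (indicator (A j) x))"
      using Bochner_Integration.integrable_diff[OF intU[OF j] integrable_mult_right[OF intI, of z]] by (simp add: algebra_simps)
    define D1 where "D1 = (\<integral>x. (g x - z) * F j x \<partial>mT)"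
    define D2 where "D2 = (\<integral>x. (g x - z) * complex_of_real (indicator (A j) x) \<partial>\<nu>)"
    have IIF: "(\<integral>x. F j x \<partial>mT) = of_real (II w A M j)"
      unfolding F_def II_def h_def by (rule integral_complex_of_real)
    have "T j = (\<integral>x. (g x - z) * F j x + z * F j x \<partial>mT)"
      unfolding T_def by (simp add: algebra_simps)
    also have "\<dots> = D1 + z * of_real (II w A M j)"
      unfolding D1_def using intD1 intF IIF by simp
    finally have Tj: "T j = D1 + z * of_real (II w A M j)" .
    have ind_int: "(\<integral>x. complex_of_real (indicator (A j) x) \<partial>\<nu>) = of_real (measure \<nu> (A j))"
    proof -
      have "A j \<inter> space \<nu> = A j" using A_sets[OF j] space_nu by (auto simp: sets_borelT_iff)
      then show ?thesis by simp
    qed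
    have "U j = (\<integral>x. (g x - z) * complex_of_real (indicator (A j) x) + z * complex_of_real (indicator (A j) x) \<partial>\<nu>)"
      unfolding U_def by (simp add: algebra_simps)
    also have "\<dots> = D2 + z * of_real (measure \<nu> (A j))"
      unfolding D2_def using intD2 intI ind_int by simp
    finally have Uj: "U j = D2 + z * of_real (measure \<nu> (A j))" .
    have diff: "of_real (c j) * T j - U j = of_real (c j) * D1 - D2"
    proof -
      have "of_real (c j) * (z * of_real (II w A M j)) = z * of_real (measure \<nu> (A j))"
        using cp(3) by (metis mult.left_commute of_real_mult)
      then show ?thesis unfolding Tj Uj by (simp add: algebra_simps)
    qed
    have oscx: "cmod (g x - z) \<le> \<epsilon>" if "x \<in> A j" for x
      using osc j that x0 unfolding z_def by blast
    have bD1: "cmod D1 \<le> \<epsilon> * II w A M j"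
    proof -
      have "cmod D1 \<le> (\<integral>x. \<epsilon> * (indicator (A j) x * h x) \<partial>mT)"
        unfolding D1_def
      proof (rule Bochner_Integration.integral_norm_bound_integral[OF intD1])
        show "integrable mT (\<lambda>x. \<epsilon> * (indicator (A j) x * h x))"
          using intg_ind_h[OF j] unfolding h_def by simp
        fix x assume "x \<in> space mT"
        show "cmod ((g x - z) * F j x) \<le> \<epsilon> * (indicator (A j) x * h x)"
        proof (cases "x \<in> A j")
          case True
          then show ?thesis unfolding F_def using oscx[OF True] h0[of x]
            by (simp add: norm_mult mult_right_mono)
        next
          case False then show ?thesis unfolding F_def by simp
        qed
      qed
      also have "\<dots> = \<epsilon> * II w A M j" unfolding II_def h_def by simp
      finally show ?thesis .
    qed
    have bD2: "cmod D2 \<le> \<epsilon> * measure \<nu> (A j)"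
    proof -
      have "cmod D2 \<le> (\<integral>x. \<epsilon> * indicator (A j) x \<partial>\<nu>)"
        unfolding D2_def
      proof (rule Bochner_Integration.integral_norm_bound_integral[OF intD2])
        show "integrable \<nu> (\<lambda>x. \<epsilon> * indicator (A j) x)"
          using j by (intro integrable_bounded_fm[OF nu_fin, where B="\<bar>\<epsilon>\<bar>"]) (auto simp: indicator_def)
        fix x assume "x \<in> space \<nu>"
        show "cmod ((g x - z) * complex_of_real (indicator (A j) x)) \<le> \<epsilon> * indicator (A j) x"
          using oscx[of x] eps by (cases "x \<in> A j") (auto simp: norm_mult)
      qed
      also have "\<dots> = \<epsilon> * measure \<nu> (A j)"
      proof -
        have "A j \<inter> space \<nu> = A j" using A_sets[OF j] space_nu by (auto simp: sets_borelT_iff)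
        then show ?thesis by simp
      qed
      finally show ?thesis .
    qed
    have "cmod (of_real (c j) * T j - U j) \<le> cmod (of_real (c j) * D1) + cmod D2"
      unfolding diff by (rule norm_triangle_ineq4)
    also have "cmod (of_real (c j) * D1) = c j * cmod D1" using cp by (simp add: norm_mult)
    also have "c j * cmod D1 \<le> c j * (\<epsilon> * II w A M j)" using bD1 cp by (intro mult_left_mono) auto
    also have "c j * (\<epsilon> * II w A M j) = \<epsilon> * measure \<nu> (A j)" using cp(3) by (simp add: algebra_simps)
    finally show ?thesis using bD2 by simp
  qed
  have "cmod ((\<integral>x. g x * complex_of_real (ff \<nu> w A M K x) \<partial>mT) - (\<integral>x. g x \<partial>\<nu>))
        = cmod (\<Sum>j<K. of_real (c j) * T j - U j)"
    unfolding eq1 eq2 by (simp add: sum_subtractf)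
  also have "\<dots> \<le> (\<Sum>j<K. cmod (of_real (c j) * T j - U j))" by (rule norm_sum)
  also have "\<dots> \<le> (\<Sum>j<K. 2 * \<epsilon> * measure \<nu> (A j))" by (intro sum_mono est) auto
  also have "\<dots> = 2 * \<epsilon> * measure \<nu> (\<Union>j<K. A j)"
    using Anu A_disj by (subst nu.finite_measure_finite_Union) (auto simp: sum_distrib_left)
  also have "\<dots> \<le> 2 * \<epsilon> * measure \<nu> circ"
    using eps A_sets space_nu sets.top[of \<nu>] by (intro mult_left_mono nu.finite_measure_mono) (auto simp: sets_borelT_iff)
  finally show ?thesis .
qed

end

lemma per_n: "\<exists>f. f \<in> borel_measurable mT \<and> bounded (f ` circ) \<and> (\<forall>x\<in>circ. 0 \<le> f x \<and> ennreal (f x) \<le> logm w x) \<and>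
  (\<forall>g \<epsilon>. continuous_on circ g \<longrightarrow> 0 \<le> \<epsilon> \<longrightarrow> (\<forall>j<K. \<forall>x\<in>A j. \<forall>y\<in>A j. cmod (g x - g y) \<le> \<epsilon>) \<longrightarrow>
     cmod ((\<integral>x. g x * complex_of_real (f x) \<partial>mT) - (\<integral>x. g x \<partial>\<nu>)) \<le> 2 * \<epsilon> * measure \<nu> circ)"
proof -
  obtain M where M: "\<forall>j<K. emeasure \<nu> (A j) \<le> (\<integral>\<^sup>+ x. indicator (A j) x * ennreal (HH w M x) \<partial>mT)"
    using exists_M by blast
  define f where "f = ff \<nu> w A M K"
  have "f \<in> borel_measurable mT" unfolding f_def by (rule ff_meas[OF M])
  moreover have "bounded (f ` circ)" unfolding bounded_iff
  proof (intro exI ballI)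
    fix y assume "y \<in> f ` circ"
    then obtain x where "y = f x" by auto
    then show "norm y \<le> real M" unfolding f_def using ff_bounds[OF M, of x] HH_le[of w M x] by simp
  qed
  moreover have "\<forall>x\<in>circ. 0 \<le> f x \<and> ennreal (f x) \<le> logm w x"
  proof
    fix x
    have "ennreal (f x) \<le> ennreal (HH w M x)" unfolding f_def using ff_bounds[OF M, of x] by (intro ennreal_leI) auto
    also have "\<dots> \<le> logm w x" by (rule HH_le_logm)
    finally show "0 \<le> f x \<and> ennreal (f x) \<le> logm w x" unfolding f_def using ff_bounds[OF M, of x] by simp
  qed
  moreover have "\<forall>g \<epsilon>. continuous_on circ g \<longrightarrow> 0 \<le> \<epsilon> \<longrightarrow> (\<forall>j<K. \<forall>x\<in>A j. \<forall>y\<in>A j. cmod (g x - g y) \<le> \<epsilon>) \<longrightarrow>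
     cmod ((\<integral>x. g x * complex_of_real (f x) \<partial>mT) - (\<integral>x. g x \<partial>\<nu>)) \<le> 2 * \<epsilon> * measure \<nu> circ"
    unfolding f_def using estimate[OF M] by blast
  ultimately show ?thesis by blast
qed

end


theorem mainTheorem11:
  fixes w :: "complex \<Rightarrow> real" and \<nu> :: "complex measure"
  assumes w_int: "integrable mT w"
    and w_nonneg: "\<forall>x\<in>circ. 0 \<le> w x"
    and nu_sets: "sets \<nu> = sets borelT"
    and nu_fin: "finite_measure \<nu>"
    and nu_sing: "singular_wrt \<nu> mT"
    and nu_core: "emeasure \<nu> (core w) = 0"
  shows "\<exists>f :: nat \<Rightarrow> complex \<Rightarrow> real.
     (\<forall>n. f n \<in> borel_measurable mT \<and> bounded (f n ` circ)) \<and>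
     (\<forall>g :: complex \<Rightarrow> complex. continuous_on circ g \<longrightarrow>
        (\<lambda>n. \<integral> x. g x * complex_of_real (f n x) \<partial>mT) \<longlonglongrightarrow> (\<integral> x. g x \<partial>\<nu>)) \<and>
     (\<forall>n. (\<integral> x. f n x \<partial>mT) = measure \<nu> circ) \<and>
     (\<forall>n. \<forall>x\<in>circ. 0 \<le> f n x \<and> ennreal (f n x) \<le> logm w x)"
proof -
  have w_meas: "w \<in> borel_measurable mT" using w_int by (rule borel_measurable_integrable)
  have space_nu: "space \<nu> = circ" using sets_eq_imp_space_eq[OF nu_sets] by simp
  define P where "P n f \<longleftrightarrow> f \<in> borel_measurable mT \<and> bounded (f ` circ) \<and> (\<forall>x\<in>circ. 0 \<le> f x \<and> ennreal (f x) \<le> logm w x) \<and>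
    (\<forall>g \<epsilon>. continuous_on circ g \<longrightarrow> 0 \<le> \<epsilon> \<longrightarrow>
       (\<forall>s t. s \<in> {0..2} \<longrightarrow> t \<in> {0..2} \<longrightarrow> \<bar>s - t\<bar> \<le> 1 / real (Suc n) \<longrightarrow> cmod (g (ee s) - g (ee t)) \<le> \<epsilon>) \<longrightarrow>
     cmod ((\<integral>x. g x * complex_of_real (f x) \<partial>mT) - (\<integral>x. g x \<partial>\<nu>)) \<le> 2 * \<epsilon> * measure \<nu> circ)" for n f
  have "\<exists>f. P n f" for n
  proof -
    obtain A where A: "\<forall>j<Suc n. open_arc (A j)" "disjoint_family_on A {..<Suc n}"
      "\<forall>j<Suc n. \<forall>x\<in>A j. \<forall>y\<in>A j. \<exists>t t'. t\<in>{0..2} \<and> t'\<in>{0..2} \<and> \<bar>t - t'\<bar> \<le> 1 / real (Suc n) \<and> x = ee t \<and> y = ee t'"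
      "emeasure \<nu> (circ - (\<Union>j<Suc n. A j)) = 0"
      using partition_exists[OF nu_fin nu_sets, of "Suc n"] by auto
    have "\<exists>f. f \<in> borel_measurable mT \<and> bounded (f ` circ) \<and> (\<forall>x\<in>circ. 0 \<le> f x \<and> ennreal (f x) \<le> logm w x) \<and>
      (\<forall>g \<epsilon>. continuous_on circ g \<longrightarrow> 0 \<le> \<epsilon> \<longrightarrow> (\<forall>j<Suc n. \<forall>x\<in>A j. \<forall>y\<in>A j. cmod (g x - g y) \<le> \<epsilon>) \<longrightarrow>
       cmod ((\<integral>x. g x * complex_of_real (f x) \<partial>mT) - (\<integral>x. g x \<partial>\<nu>)) \<le> 2 * \<epsilon> * measure \<nu> circ)"
    proof (rule per_n[OF w_meas nu_fin nu_sets])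
      show "\<And>j. j < Suc n \<Longrightarrow> A j \<in> sets borelT" using A(1) open_arc_sets by blast
      show "disjoint_family_on A {..<Suc n}" by (rule A(2))
      show "emeasure \<nu> (circ - (\<Union>j<Suc n. A j)) = 0" by (rule A(4))
      show "\<And>j. j < Suc n \<Longrightarrow> emeasure \<nu> (A j) \<noteq> 0 \<Longrightarrow> (\<integral>\<^sup>+ x. indicator (A j) x * logm w x \<partial>mT) = \<infinity>"
        using A(1) arc_infinite[OF _ nu_sets nu_core] by blast
    qed
    then obtain f where f: "f \<in> borel_measurable mT" "bounded (f ` circ)" "\<forall>x\<in>circ. 0 \<le> f x \<and> ennreal (f x) \<le> logm w x"
      "\<And>g \<epsilon>. continuous_on circ g \<Longrightarrow> 0 \<le> \<epsilon> \<Longrightarrow> (\<forall>j<Suc n. \<forall>x\<in>A j. \<forall>y\<in>A j. cmod (g x - g y) \<le> \<epsilon>) \<Longrightarrow>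
       cmod ((\<integral>x. g x * complex_of_real (f x) \<partial>mT) - (\<integral>x. g x \<partial>\<nu>)) \<le> 2 * \<epsilon> * measure \<nu> circ"
      by blast
    have "P n f" unfolding P_def
    proof (intro conjI f(1,2,3) allI impI)
      fix g :: "complex \<Rightarrow> complex" and \<epsilon> :: real
      assume g: "continuous_on circ g" "0 \<le> \<epsilon>"
        and osc: "\<forall>s t. s \<in> {0..2} \<longrightarrow> t \<in> {0..2} \<longrightarrow> \<bar>s - t\<bar> \<le> 1 / real (Suc n) \<longrightarrow> cmod (g (ee s) - g (ee t)) \<le> \<epsilon>"
      have "\<forall>j<Suc n. \<forall>x\<in>A j. \<forall>y\<in>A j. cmod (g x - g y) \<le> \<epsilon>"
      proof (intro allI impI ballI)
        fix j x y assume "j < Suc n" "x \<in> A j" "y \<in> A j"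
        then obtain t t' where "t\<in>{0..2}" "t'\<in>{0..2}" "\<bar>t - t'\<bar> \<le> 1 / real (Suc n)" "x = ee t" "y = ee t'"
          using A(3) by blast
        then show "cmod (g x - g y) \<le> \<epsilon>" using osc by blast
      qed
      then show "cmod ((\<integral>x. g x * complex_of_real (f x) \<partial>mT) - (\<integral>x. g x \<partial>\<nu>)) \<le> 2 * \<epsilon> * measure \<nu> circ"
        using f(4)[OF g] by blast
    qed
    then show ?thesis by blast
  qed
  then obtain f where f: "\<And>n. P n (f n)" by metis
  have meas_nonneg: "0 \<le> measure \<nu> circ" by simp
  have conv: "(\<lambda>n. \<integral> x. g x * complex_of_real (f n x) \<partial>mT) \<longlonglongrightarrow> (\<integral> x. g x \<partial>\<nu>)"
    if gc: "continuous_on circ g" for g :: "complex \<Rightarrow> complex"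
  proof (rule LIMSEQ_I)
    fix r :: real assume r: "0 < r"
    define e where "e = r / (2 * (measure \<nu> circ + 1))"
    have "0 < 2 * (measure \<nu> circ + 1)" by (intro mult_pos_pos add_nonneg_pos measure_nonneg) auto
    then have e: "0 < e" unfolding e_def using r by (rule divide_pos_pos[rotated])
    have "continuous_on {0..2} (g \<circ> ee)"
      by (intro continuous_on_compose continuous_ee continuous_on_subset[OF gc]) auto
    then have "uniformly_continuous_on {0..2} (g \<circ> ee)"
      by (intro compact_uniformly_continuous) auto
    then obtain d where d: "0 < d" "\<And>s t. s \<in> {0..2} \<Longrightarrow> t \<in> {0..2} \<Longrightarrow> dist t s < d \<Longrightarrow> dist ((g \<circ> ee) t) ((g \<circ> ee) s) < e"
      unfolding uniformly_continuous_on_def using e by metis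
    obtain n0 where n0: "inverse (real (Suc n0)) < d" using reals_Archimedean[OF d(1)] by blast
    show "\<exists>no. \<forall>n\<ge>no. norm ((\<integral> x. g x * complex_of_real (f n x) \<partial>mT) - (\<integral> x. g x \<partial>\<nu>)) < r"
    proof (intro exI allI impI)
      fix n assume "n0 \<le> n"
      then have "1 / real (Suc n) \<le> 1 / real (Suc n0)" by (intro divide_left_mono) auto
      with n0 have nd: "1 / real (Suc n) < d" by (simp add: inverse_eq_divide)
      have osc: "\<forall>s t. s \<in> {0..2} \<longrightarrow> t \<in> {0..2} \<longrightarrow> \<bar>s - t\<bar> \<le> 1 / real (Suc n) \<longrightarrow> cmod (g (ee s) - g (ee t)) \<le> e"
      proof (intro allI impI)
        fix s t :: real assume st: "s \<in> {0..2}" "t \<in> {0..2}" "\<bar>s - t\<bar> \<le> 1 / real (Suc n)"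
        then have "dist s t < d" using nd by (simp add: dist_real_def)
        then have "dist ((g \<circ> ee) s) ((g \<circ> ee) t) < e" using d(2)[OF st(2) st(1)] by simp
        then show "cmod (g (ee s) - g (ee t)) \<le> e" by (simp add: dist_norm)
      qed
      have "norm ((\<integral> x. g x * complex_of_real (f n x) \<partial>mT) - (\<integral> x. g x \<partial>\<nu>)) \<le> 2 * e * measure \<nu> circ"
        using f[of n] gc e osc unfolding P_def by auto
      also have "\<dots> < r"
      proof -
        have "2 * e * measure \<nu> circ = r * (measure \<nu> circ / (measure \<nu> circ + 1))"
        proof -
          have "measure \<nu> circ + 1 > 0" by (intro add_nonneg_pos measure_nonneg) auto
          then show ?thesis unfolding e_def by (simp add: field_simps)
        qed
        also have "\<dots> < r * 1"
        proof -
          have "measure \<nu> circ + 1 > 0" by (intro add_nonneg_pos measure_nonneg) auto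
          then show ?thesis using r by (intro mult_strict_left_mono) auto
        qed
        finally show ?thesis by simp
      qed
      finally show "norm ((\<integral> x. g x * complex_of_real (f n x) \<partial>mT) - (\<integral> x. g x \<partial>\<nu>)) < r" .
    qed
  qed
  have total: "(\<integral> x. f n x \<partial>mT) = measure \<nu> circ" for n
  proof -
    have H: "\<forall>g \<epsilon>. continuous_on circ g \<longrightarrow> 0 \<le> \<epsilon> \<longrightarrow>
       (\<forall>s t. s \<in> {0..2} \<longrightarrow> t \<in> {0..2} \<longrightarrow> \<bar>s - t\<bar> \<le> 1 / real (Suc n) \<longrightarrow> cmod (g (ee s) - g (ee t)) \<le> \<epsilon>) \<longrightarrow>
     cmod ((\<integral>x. g x * complex_of_real (f n x) \<partial>mT) - (\<integral>x. g x \<partial>\<nu>)) \<le> 2 * \<epsilon> * measure \<nu> circ"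
      using f[of n] unfolding P_def by blast
    have "cmod ((\<integral>x. (\<lambda>_. 1::complex) x * complex_of_real (f n x) \<partial>mT) - (\<integral>x. (\<lambda>_. 1::complex) x \<partial>\<nu>)) \<le> 2 * 0 * measure \<nu> circ"
      using H[rule_format, of "\<lambda>_. 1::complex" 0] by (simp add: continuous_on_const)
    then have "(\<integral>x. complex_of_real (f n x) \<partial>mT) = (\<integral>x. 1 \<partial>\<nu>)" by simp
    also have "\<dots> = complex_of_real (measure \<nu> circ)" using space_nu by (simp add: scaleR_conv_of_real)
    finally have "complex_of_real (integral\<^sup>L mT (f n)) = complex_of_real (measure \<nu> circ)" by simp
    then show ?thesis using space_nu by simp
  qed
  show ?thesis
    using f conv total unfolding P_def by blast
qed


end
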